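(* Let $m\ge 2$ be even and $n\ge 2$. Let $c=(c_1,\dots,c_n)^T,\ d=(d_1,\dots,d_n)^T\in\mathbb{R}^n$ with $d_i\neq 0$ for all $i\in[n]$, and assume $c_{i_1}+\cdots+c_{i_m}\neq 0$ for all $i_1,\dots,i_m\in[n]$. Let $\mathcal{C}$ be the generalized Cauchy tensor of order $m$ and dimension $n$ with generating vectors $c,d$. Then the following are equivalent: (i) $\mathcal{C}$ is a completely decomposable tensor; (ii) $\mathcal{C}$ is an SOS tensor; (iii) $\mathcal{C}$ is positive semi-definite; (iv) $c_i>0$ for all $i\in[n]$.
   Context: $[n]=\{1,\dots,n\}$. For a real order-$m$ dimension-$n$ tensor $\mathcal{A}=(a_{i_1\cdots i_m})$ and $x\in\mathbb{R}^n$, $\mathcal{A}x^m=\sum_{i_1,\dots,i_m=1}^n a_{i_1\cdots i_m}x_{i_1}\cdots x_{i_m}$. The generalized Cauchy tensor with generating vectors $c,d\in\mathbb{R}^n$ is $\mathcal{C}=(c_{i_1\cdots i_m})$ with $c_{i_1\cdots i_m}=\frac{d_{i_1}d_{i_2}\cdots d_{i_m}}{c_{i_1}+c_{i_2}+\cdots+c_{i_m}}$. A tensor $\mathcal{A}$ (of even order $m$) is positive semi-definite if $\mathcal{A}x^m\ge 0$ for all $x\in\mathbb{R}^n$. A symmetric tensor $\mathcal{A}$ of even order $m=2k$ is an SOS tensor if the polynomial $x\mapsto\mathcal{A}x^m$ is a sum of squares of polynomials of degree $k$. $\mathcal{A}$ is completely decomposable if there exist vectors $x_1,\dots,x_r\in\mathbb{R}^n$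 with $\mathcal{A}=\sum_{j=1}^r x_j^{m}$, where $x^m$ denotes the rank-one tensor with entries $x_{i_1}x_{i_2}\cdots x_{i_m}$. *)

theory Defs
  imports "HOL-Analysis.Analysis" "HOL-Library.Multiset"
begin

text \<open>A real tensor of order m and dimension n = CARD('n) is represented as a function
  on index lists; only lists of length m are meaningful.\<close>
type_synonym 'n tensor = "'n list \<Rightarrow> real"

definition index_tuples :: "nat \<Rightarrow> 'n list set" where
  "index_tuples m = {is. length is = m}"

definition tensor_form :: "nat \<Rightarrow> 'n::finite tensor \<Rightarrow> real ^ 'n \<Rightarrow> real" where
  "tensor_form m A x = (\<Sum>is\<in>index_tuples m. A is * (\<Prod>t<m. x $ (is ! t)))"

definition gen_cauchy_tensor :: "real ^ 'n \<Rightarrow> real ^ 'n \<Rightarrow> 'n tensor" where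
  "gen_cauchy_tensor c d = (\<lambda>is. (\<Prod>t<length is. d $ (is ! t)) / (\<Sum>t<length is. c $ (is ! t)))"

definition symmetric_tensor :: "nat \<Rightarrow> 'n tensor \<Rightarrow> bool" where
  "symmetric_tensor m A \<longleftrightarrow>
     (\<forall>is js. length is = m \<longrightarrow> mset js = mset is \<longrightarrow> A js = A is)"

definition psd_tensor :: "nat \<Rightarrow> 'n::finite tensor \<Rightarrow> bool" where
  "psd_tensor m A \<longleftrightarrow> (\<forall>x. tensor_form m A x \<ge> 0)"

text \<open>Real polynomials in n variables of (total) degree at most k, given by a
  coefficient function on exponent vectors.\<close>
definition monomials_le :: "nat \<Rightarrow> ('n::finite \<Rightarrow> nat) set" where
  "monomials_le k = {\<alpha>. (\<Sum>i\<in>UNIV. \<alpha> i) \<le> k}"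

definition poly_eval :: "nat \<Rightarrow> (('n::finite \<Rightarrow> nat) \<Rightarrow> real) \<Rightarrow> real ^ 'n \<Rightarrow> real" where
  "poly_eval k a x = (\<Sum>\<alpha>\<in>monomials_le k. a \<alpha> * (\<Prod>i\<in>UNIV. (x $ i) ^ (\<alpha> i)))"

definition sos_tensor :: "nat \<Rightarrow> 'n::finite tensor \<Rightarrow> bool" where
  "sos_tensor m A \<longleftrightarrow> symmetric_tensor m A \<and>
     (\<exists>ps :: (('n \<Rightarrow> nat) \<Rightarrow> real) list.
        \<forall>x. tensor_form m A x = (\<Sum>p\<leftarrow>ps. (poly_eval (m div 2) p x)^2))"

definition completely_decomposable :: "nat \<Rightarrow> 'n::finite tensor \<Rightarrow> bool" where
  "completely_decomposable m A \<longleftrightarrow>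
     (\<exists>xs :: (real ^ 'n) list. \<forall>is\<in>index_tuples m.
        A is = (\<Sum>v\<leftarrow>xs. \<Prod>t<m. v $ (is ! t)))"

end

theory Submission
  imports Defs "HOL-Real_Asymp.Real_Asymp"
begin

lemma finite_index_tuples: "finite (index_tuples m :: 'n::finite list set)"
  unfolding index_tuples_def by (rule finite_list_length)

lemma index_tuples_Suc:
  "index_tuples (Suc k) = (\<lambda>(i,is). i # is) ` (UNIV \<times> index_tuples k)"
  unfolding index_tuples_def
  by (auto simp: image_iff length_Suc_conv)

lemma pow_sum_tuples:
  fixes y :: "'n::finite \<Rightarrow> real"
  shows "(\<Sum>i\<in>UNIV. y i) ^ k = (\<Sum>is\<in>index_tuples k. \<Prod>t<k. y (is ! t))"
proof (induction k)
  case 0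
  then show ?case by (simp add: index_tuples_def)
next
  case (Suc k)
  have inj: "inj_on (\<lambda>(i,is). i # is) (UNIV \<times> index_tuples k)"
    by (auto simp: inj_on_def)
  have "(\<Sum>is\<in>index_tuples (Suc k). \<Prod>t<Suc k. y (is ! t))
      = (\<Sum>p\<in>UNIV \<times> index_tuples k. \<Prod>t<Suc k. y ((fst p # snd p) ! t))"
    unfolding index_tuples_Suc by (subst sum.reindex[OF inj]) (simp add: case_prod_beta)
  also have "\<dots> = (\<Sum>p\<in>UNIV \<times> index_tuples k. y (fst p) * (\<Prod>t<k. y (snd p ! t)))"
    by (simp del: prod.lessThan_Suc add: prod.lessThan_Suc_shift)
  also have "\<dots> = (\<Sum>i\<in>UNIV. \<Sum>is\<in>index_tuples k. y i * (\<Prod>t<k. y (is ! t)))"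
    by (simp add: sum.cartesian_product case_prod_beta)
  also have "\<dots> = (\<Sum>i\<in>UNIV. y i) * (\<Sum>is\<in>index_tuples k. \<Prod>t<k. y (is ! t))"
    by (simp add: sum_product)
  finally show ?case using Suc by simp
qed

lemma prod_nth_count:
  fixes x :: "'n::finite \<Rightarrow> real"
  shows "(\<Prod>t<length is. x (is ! t)) = (\<Prod>i\<in>UNIV. x i ^ count (mset is) i)"
proof (induction "is" rule: list.induct)
  case Nil
  then show ?case by simp
next
  case (Cons a xs)
  have "(\<Prod>i\<in>UNIV. x i ^ count (mset (a # xs)) i)
      = (\<Prod>i\<in>UNIV. (if i = a then x i else 1) * x i ^ count (mset xs) i)"
    by (rule prod.cong) auto
  also have "\<dots> = x a * (\<Prod>i\<in>UNIV. x i ^ count (mset xs) i)"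
    by (simp add: prod.distrib)
  finally show ?case using Cons by (simp del: prod.lessThan_Suc add: prod.lessThan_Suc_shift)
qed

lemma sum_count_UNIV: "(\<Sum>i\<in>(UNIV::'n::finite set). count M i) = size M"
  by (simp add: size_multiset_overloaded_eq sum.mono_neutral_right count_eq_zero_iff)

lemma finite_monomials_le: "finite (monomials_le k :: ('n::finite \<Rightarrow> nat) set)"
proof -
  have "(monomials_le k :: ('n \<Rightarrow> nat) set) \<subseteq> {f. \<forall>x. f x \<in> {..k}}"
    unfolding monomials_le_def
  proof
    fix f :: "'n \<Rightarrow> nat" assume "f \<in> {\<alpha>. sum \<alpha> UNIV \<le> k}"
    then have "sum f UNIV \<le> k" by simp
    moreover have "\<forall>x. f x \<le> sum f UNIV" by (simp add: member_le_sum)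
    ultimately show "f \<in> {f. \<forall>x. f x \<in> {..k}}" by (auto intro: order_trans)
  qed
  moreover have "finite {f::'n\<Rightarrow>nat. \<forall>x. f x \<in> {..k}}"
    using finite_PiE[of "UNIV::'n set" "\<lambda>_. {..k}"] by (simp add: PiE_def Pi_def)
  ultimately show ?thesis by (rule finite_subset)
qed

lemma linear_pow_poly:
  fixes v :: "real ^ 'n::finite"
  shows "\<exists>p. \<forall>x. (\<Sum>i\<in>UNIV. v $ i * x $ i) ^ k = poly_eval k p x"
proof -
  define al where "al = (\<lambda>is::'n list. \<lambda>i. count (mset is) i)"
  define p where "p = (\<lambda>\<beta>. \<Sum>is\<in>{is\<in>index_tuples k. al is = \<beta>}. \<Prod>t<k. v $ (is ! t))"
  have img: "al ` index_tuples k \<subseteq> monomials_le k"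
    by (auto simp: al_def monomials_le_def index_tuples_def sum_count_UNIV)
  have "(\<Sum>i\<in>UNIV. v $ i * x $ i) ^ k = poly_eval k p x" for x
  proof -
    have "(\<Sum>i\<in>UNIV. v $ i * x $ i) ^ k
        = (\<Sum>is\<in>index_tuples k. (\<Prod>t<k. v $ (is ! t)) * (\<Prod>t<k. x $ (is ! t)))"
      by (subst pow_sum_tuples) (simp add: prod.distrib)
    also have "\<dots> = (\<Sum>is\<in>index_tuples k. (\<Prod>t<k. v $ (is ! t)) * (\<Prod>i\<in>UNIV. (x $ i) ^ al is i))"
      by (rule sum.cong) (auto simp: index_tuples_def al_def prod_nth_count[where x="\<lambda>i. x $ i", symmetric])
    also have "\<dots> = (\<Sum>\<beta>\<in>monomials_le k. \<Sum>is\<in>{is\<in>index_tuples k. al is = \<beta>}.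
                 (\<Prod>t<k. v $ (is ! t)) * (\<Prod>i\<in>UNIV. (x $ i) ^ al is i))"
      by (rule sum.group[symmetric, OF finite_index_tuples finite_monomials_le img])
    also have "\<dots> = poly_eval k p x"
      unfolding poly_eval_def p_def
      by (rule sum.cong[OF refl]) (simp add: sum_distrib_right)
    finally show ?thesis .
  qed
  then show ?thesis by blast
qed


lemma lin_dep:
  fixes g :: "'j \<Rightarrow> 'i \<Rightarrow> real"
  assumes "finite I" "finite J" "card I < card J"
  shows "\<exists>l. (\<exists>j\<in>J. l j \<noteq> 0) \<and> (\<forall>i\<in>I. (\<Sum>j\<in>J. l j * g j i) = 0)"
  using assms
proof (induction I arbitrary: J g rule: finite_induct)
  case empty
  then have "J \<noteq> {}" by auto
  then show ?case by (intro exI[of _ "\<lambda>_. 1"]) auto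
next
  case (insert i0 I)
  show ?case
  proof (cases "\<forall>j\<in>J. g j i0 = 0")
    case True
    from insert.prems insert.hyps have "card I < card J" by simp
    from insert.IH[OF insert.prems(1) this, of g] obtain l where
      l: "\<exists>j\<in>J. l j \<noteq> 0" "\<forall>i\<in>I. (\<Sum>j\<in>J. l j * g j i) = 0" by blast
    show ?thesis using l True by (intro exI[of _ l]) auto
  next
    case False
    then obtain j0 where j0: "j0 \<in> J" "g j0 i0 \<noteq> 0" by blast
    define J' where "J' = J - {j0}"
    define h where "h = (\<lambda>j i. g j i - (g j i0 / g j0 i0) * g j0 i)"
    have fJ': "finite J'" using insert.prems by (simp add: J'_def)
    have "card I < card J'" using insert.prems insert.hyps j0 by (simp add: J'_def)
    from insert.IH[OF fJ' this, of h] obtain mu where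
      mu: "\<exists>j\<in>J'. mu j \<noteq> 0" "\<forall>i\<in>I. (\<Sum>j\<in>J'. mu j * h j i) = 0" by blast
    define l where "l = (\<lambda>j. if j = j0 then - (\<Sum>j\<in>J'. mu j * g j i0) / g j0 i0 else mu j)"
    have split: "(\<Sum>j\<in>J. l j * g j i) = l j0 * g j0 i + (\<Sum>j\<in>J'. mu j * g j i)" for i
    proof -
      have "(\<Sum>j\<in>J. l j * g j i) = l j0 * g j0 i + (\<Sum>j\<in>J'. l j * g j i)"
        unfolding J'_def using j0 insert.prems by (simp add: sum.remove)
      moreover have "(\<Sum>j\<in>J'. l j * g j i) = (\<Sum>j\<in>J'. mu j * g j i)"
        by (rule sum.cong) (auto simp: l_def J'_def)
      ultimately show ?thesis by simp
    qed
    have "\<forall>i\<in>insert i0 I. (\<Sum>j\<in>J. l j * g j i) = 0"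
    proof
      fix i assume "i \<in> insert i0 I"
      then show "(\<Sum>j\<in>J. l j * g j i) = 0"
      proof
        assume "i = i0"
        have "(\<Sum>j\<in>J. l j * g j i0) = l j0 * g j0 i0 + (\<Sum>j\<in>J'. mu j * g j i0)"
          by (rule split)
        also have "\<dots> = 0" using j0 by (simp add: l_def)
        finally show ?thesis using \<open>i = i0\<close> by simp
      next
        assume i: "i \<in> I"
        have "(\<Sum>j\<in>J'. mu j * h j i) = (\<Sum>j\<in>J'. mu j * g j i)
            - (\<Sum>j\<in>J'. mu j * g j i0) / g j0 i0 * g j0 i"
          unfolding h_def by (simp add: algebra_simps sum_subtractf sum_distrib_left sum_distrib_right sum_divide_distrib)
        have "(\<Sum>j\<in>J. l j * g j i) = l j0 * g j0 i + (\<Sum>j\<in>J'. mu j * g j i)"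
          by (rule split)
        also have "\<dots> = 0" using mu(2) i \<open>(\<Sum>j\<in>J'. mu j * h j i) = _\<close> by (simp add: l_def)
        finally show ?thesis .
      qed
    qed
    moreover have "\<exists>j\<in>J. l j \<noteq> 0" using mu(1) by (auto simp: l_def J'_def)
    ultimately show ?thesis by blast
  qed
qed

lemma caratheodory_cone:
  fixes g :: "'j \<Rightarrow> 'i \<Rightarrow> real"
  assumes "finite I" "finite J" "\<forall>j\<in>J. w j \<ge> 0" "\<forall>i\<in>I. f i = (\<Sum>j\<in>J. w j * g j i)"
  shows "\<exists>J' w'. J' \<subseteq> J \<and> card J' \<le> card I \<and> (\<forall>j\<in>J'. w' j \<ge> 0) \<and>
           (\<forall>i\<in>I. f i = (\<Sum>j\<in>J'. w' j * g j i))"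
  using assms(2-4)
proof (induction "card J" arbitrary: J w rule: less_induct)
  case less
  show ?case
  proof (cases "card J \<le> card I")
    case True
    then show ?thesis using less.prems by blast
  next
    case False
    then obtain l0 where l0: "\<exists>j\<in>J. l0 j \<noteq> 0" "\<forall>i\<in>I. (\<Sum>j\<in>J. l0 j * g j i) = 0"
      using lin_dep[OF assms(1) less.prems(1), of g] by auto
    obtain l where l: "\<exists>j\<in>J. l j > 0" "\<forall>i\<in>I. (\<Sum>j\<in>J. l j * g j i) = 0"
    proof (cases "\<exists>j\<in>J. l0 j > 0")
      case True then show ?thesis using that l0 by blast
    next
      case False
      then have "\<exists>j\<in>J. - l0 j > 0" using l0(1) by force
      moreover have "\<forall>i\<in>I. (\<Sum>j\<in>J. (- l0 j) * g j i) = 0"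
        using l0(2) by (simp add: sum_negf)
      ultimately show ?thesis using that[of "\<lambda>j. - l0 j"] by blast
    qed
    define P where "P = {j\<in>J. l j > 0}"
    have fP: "finite P" "P \<noteq> {}" using l(1) less.prems(1) by (auto simp: P_def)
    define t where "t = Min ((\<lambda>j. w j / l j) ` P)"
    have "t \<in> (\<lambda>j. w j / l j) ` P" unfolding t_def using fP by (intro Min_in) auto
    then obtain j0 where j0: "j0 \<in> P" "t = w j0 / l j0" by blast
    have tle: "t \<le> w j / l j" if "j \<in> P" for j
      unfolding t_def using fP that by (intro Min_le) auto
    have t0: "t \<ge> 0" using j0 less.prems(2) by (auto simp: P_def)
    define w2 where "w2 = (\<lambda>j. w j - t * l j)"
    have w2nn: "\<forall>j\<in>J. w2 j \<ge> 0"
    proof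
      fix j assume j: "j \<in> J"
      show "w2 j \<ge> 0"
      proof (cases "l j > 0")
        case True
        then have "t * l j \<le> w j" using tle[of j] j by (auto simp: P_def pos_le_divide_eq)
        then show ?thesis by (simp add: w2_def)
      next
        case False
        then have "t * l j \<le> 0" using t0 by (simp add: mult_nonneg_nonpos)
        moreover have "w j \<ge> 0" using less.prems(2) j by simp
        ultimately show ?thesis by (simp add: w2_def)
      qed
    qed
    have w2j0: "w2 j0 = 0" using j0 by (simp add: w2_def P_def)
    have j0J: "j0 \<in> J" using j0 by (simp add: P_def)
    have rep: "\<forall>i\<in>I. f i = (\<Sum>j\<in>J - {j0}. w2 j * g j i)"
    proof
      fix i assume i: "i \<in> I"
      have "(\<Sum>j\<in>J. w2 j * g j i) = (\<Sum>j\<in>J. w j * g j i) - t * (\<Sum>j\<in>J. l j * g j i)"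
        by (simp add: w2_def algebra_simps sum_subtractf sum_distrib_left)
      also have "\<dots> = f i" using i l(2) less.prems(3) by simp
      finally have "f i = (\<Sum>j\<in>J. w2 j * g j i)" by simp
      also have "\<dots> = (\<Sum>j\<in>J - {j0}. w2 j * g j i)"
        using j0J less.prems(1) w2j0 by (simp add: sum.remove)
      finally show "f i = (\<Sum>j\<in>J - {j0}. w2 j * g j i)" .
    qed
    have "card (J - {j0}) < card J" using j0J less.prems(1) by (meson card_Diff1_less)
    from less.hyps[OF this _ _ rep] less.prems(1) w2nn
    obtain J' w' where "J' \<subseteq> J - {j0}" "card J' \<le> card I" "\<forall>j\<in>J'. w' j \<ge> 0"
      "\<forall>i\<in>I. f i = (\<Sum>j\<in>J'. w' j * g j i)" by auto
    then show ?thesis by blast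
  qed
qed


lemma extract_subseq:
  fixes V :: "nat \<Rightarrow> nat \<Rightarrow> real^'n::finite"
  assumes "\<And>M j. j < R \<Longrightarrow> norm (V M j) \<le> B"
  shows "\<exists>\<sigma> W. strict_mono \<sigma> \<and> (\<forall>j<R. (\<lambda>M. V (\<sigma> M) j) \<longlonglongrightarrow> W j)"
  using assms
proof (induction R)
  case 0
  then show ?case by (intro exI[of _ id]) (auto simp: strict_mono_def)
next
  case (Suc R)
  then obtain \<sigma> W where s: "strict_mono \<sigma>" "\<forall>j<R. (\<lambda>M. V (\<sigma> M) j) \<longlonglongrightarrow> W j" by auto
  have "bounded (range (\<lambda>M. V (\<sigma> M) R))"
    using Suc.prems[of R] by (auto simp: bounded_iff)
  then obtain l r where r: "strict_mono r" "((\<lambda>M. V (\<sigma> M) R) \<circ> r) \<longlonglongrightarrow> l"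
    using bounded_imp_convergent_subsequence by blast
  have "strict_mono (\<sigma> \<circ> r)" using s(1) r(1) by (rule strict_mono_o)
  moreover have "\<forall>j<Suc R. (\<lambda>M. V ((\<sigma> \<circ> r) M) j) \<longlonglongrightarrow> (W(R := l)) j"
  proof (intro allI impI)
    fix j assume j: "j < Suc R"
    show "(\<lambda>M. V ((\<sigma> \<circ> r) M) j) \<longlonglongrightarrow> (W(R := l)) j"
    proof (cases "j = R")
      case True then show ?thesis using r(2) by (simp add: o_def)
    next
      case False
      then have "j < R" using j by simp
      then have "(\<lambda>M. V (\<sigma> M) j) \<longlonglongrightarrow> W j" using s(2) by simp
      from LIMSEQ_subseq_LIMSEQ[OF this r(1)] False show ?thesis by (simp add: o_def)
    qed
  qed
  ultimately show ?case by blast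
qed

lemma geo_limit:
  fixes a :: real assumes a: "a > 0"
  shows "(\<lambda>M::nat. (1 / real M) * (\<Sum>k<M^2. exp (- (real k * a / real M)))) \<longlonglongrightarrow> 1 / a"
proof -
  define f where "f = (\<lambda>M::real. (1 - exp(-a*M))/(M*(1 - exp(-a/M))))"
  have lim: "(f \<longlongrightarrow> inverse a) at_top" unfolding f_def using a by real_asymp
  have "(\<lambda>M::nat. f (real M)) \<longlonglongrightarrow> inverse a"
    by (rule filterlim_compose[OF lim filterlim_real_sequentially])
  moreover have "\<forall>\<^sub>F M in sequentially. f (real M) = (1 / real M) * (\<Sum>k<M^2. exp (- (real k * a / real M)))"
    using eventually_gt_at_top[of "0::nat"]
  proof eventually_elim
    case (elim M)
    define q where "q = exp (- (a / real M))"
    have q1: "q \<noteq> 1" using a elim by (simp add: q_def)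
    have "(\<Sum>k<M^2. exp (- (real k * a / real M))) = (\<Sum>k<M^2. q ^ k)"
      by (rule sum.cong) (auto simp: q_def exp_of_nat_mult[symmetric] field_simps)
    also have "\<dots> = (1 - q ^ (M^2)) / (1 - q)" using q1 by (simp add: sum_gp_strict)
    also have "q ^ (M^2) = exp (- a * real M)"
      using elim by (simp add: q_def exp_of_nat_mult[symmetric] power2_eq_square field_simps)
    finally show ?case using elim by (simp add: f_def q_def field_simps)
  qed
  ultimately show ?thesis by (simp add: Lim_transform_eventually inverse_eq_divide)
qed

definition rk :: "nat \<Rightarrow> real^'n \<Rightarrow> 'n list \<Rightarrow> real" where
  "rk m v is = (\<Prod>t<m. v $ (is ! t))"

lemma rk_scale: "rk m (r *\<^sub>R v) is = r ^ m * rk m v is"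
  by (simp add: rk_def prod.distrib)

lemma rk_zero: "m > 0 \<Longrightarrow> rk m 0 is = 0"
  by (simp add: rk_def)

lemma rk_replicate: "rk m v (replicate m i) = (v $ i) ^ m"
  by (simp add: rk_def)

lemma cd_of_pos:
  fixes c d :: "real^'n::finite"
  assumes m: "m > 0" "even m" and cpos: "\<forall>i. c $ i > 0"
  shows "completely_decomposable m (gen_cauchy_tensor c d)"
proof -
  define I where "I = (index_tuples m :: 'n list set)"
  define R where "R = card I"
  have fI: "finite I" unfolding I_def by (rule finite_index_tuples)
  define G where "G = gen_cauchy_tensor c d"
  define a where "a = (\<lambda>is. \<Sum>t<m. c $ (is ! t))"
  define D where "D = (\<lambda>is. \<Prod>t<m. d $ (is ! t))"
  have apos: "a is > 0" for "is"
    unfolding a_def using m cpos by (intro sum_pos) auto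
  have G_eq: "G is = D is / a is" if "is \<in> I" for "is"
    using that by (simp add: G_def gen_cauchy_tensor_def I_def index_tuples_def D_def a_def)
  define e where "e = (\<lambda>M k. (\<chi> i. d $ i * exp (- (real k * c $ i / real M))) :: real^'n)"
  define GM where "GM = (\<lambda>M is. \<Sum>k<M^2. (1 / real M) * rk m (e M k) is)"
  have rk_e: "rk m (e M k) is = D is * exp (- (real k * a is / real M))" for M k "is"
  proof -
    have "rk m (e M k) is = D is * (\<Prod>t<m. exp (- (real k * c $ (is ! t) / real M)))"
      by (simp add: rk_def e_def D_def prod.distrib)
    also have "(\<Prod>t<m. exp (- (real k * c $ (is ! t) / real M))) = exp (- (real k * a is / real M))"
      by (simp add: exp_sum[symmetric] a_def sum_distrib_left sum_divide_distrib sum_negf)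
    finally show ?thesis .
  qed
  have GM_lim: "(\<lambda>M. GM M is) \<longlonglongrightarrow> G is" if "is \<in> I" for "is"
  proof -
    have "GM M is = D is * ((1 / real M) * (\<Sum>k<M^2. exp (- (real k * a is / real M))))" for M
      by (simp add: GM_def rk_e sum_distrib_left)
    moreover have "(\<lambda>M. D is * ((1 / real M) * (\<Sum>k<M^2. exp (- (real k * a is / real M))))) \<longlonglongrightarrow> D is * (1 / a is)"
      by (intro tendsto_mult tendsto_const geo_limit apos)
    ultimately show ?thesis using G_eq[OF that] by simp
  qed
  have "\<forall>M. \<exists>VM. \<forall>is\<in>I. GM M is = (\<Sum>j<R. rk m (VM j) is)"
  proof
    fix M
    obtain J' w' where J': "J' \<subseteq> {..<M^2}" "card J' \<le> card I" "\<forall>j\<in>J'. w' j \<ge> 0"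
        "\<forall>is\<in>I. GM M is = (\<Sum>j\<in>J'. w' j * rk m (e M j) is)"
      using caratheodory_cone[OF fI, of "{..<M^2}" "\<lambda>_. 1 / real M" "GM M" "\<lambda>k. rk m (e M k)"]
      by (auto simp: GM_def)
    have fJ': "finite J'" using J'(1) finite_subset by blast
    obtain h where h: "bij_betw h {0..<card J'} J'" using ex_bij_betw_nat_finite[OF fJ'] by blast
    define VM where "VM = (\<lambda>j. if j < card J' then root m (w' (h j)) *\<^sub>R e M (h j) else 0)"
    have "GM M is = (\<Sum>j<R. rk m (VM j) is)" if "is \<in> I" for "is"
    proof -
      have "GM M is = (\<Sum>j\<in>J'. w' j * rk m (e M j) is)" using J'(4) that by simp
      also have "\<dots> = (\<Sum>j\<in>{0..<card J'}. w' (h j) * rk m (e M (h j)) is)"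
        using sum.reindex_bij_betw[OF h, of "\<lambda>j. w' j * rk m (e M j) is"] by simp
      also have "\<dots> = (\<Sum>j\<in>{0..<card J'}. rk m (VM j) is)"
      proof (rule sum.cong[OF refl])
        fix j assume j: "j \<in> {0..<card J'}"
        then have "h j \<in> J'" using h by (auto simp: bij_betw_def)
        then have "w' (h j) \<ge> 0" using J'(3) by simp
        then show "w' (h j) * rk m (e M (h j)) is = rk m (VM j) is"
          using j m by (simp add: VM_def rk_scale real_root_pow_pos2)
      qed
      also have "\<dots> = (\<Sum>j<R. rk m (VM j) is)"
        using J'(2) m unfolding R_def
        by (intro sum.mono_neutral_left) (auto simp: VM_def rk_zero)
      finally show ?thesis .
    qed
    then show "\<exists>VM. \<forall>is\<in>I. GM M is = (\<Sum>j<R. rk m (VM j) is)" by blast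
  qed
  then obtain V where V: "\<And>M is. is \<in> I \<Longrightarrow> GM M is = (\<Sum>j<R. rk m (V M j) is)"
    by metis
  have rep_in: "replicate m i \<in> I" for i by (simp add: I_def index_tuples_def)
  have "\<forall>i. \<exists>K. \<forall>M. \<bar>GM M (replicate m i)\<bar> \<le> K"
  proof
    fix i
    have "Bseq (\<lambda>M. GM M (replicate m i))"
      using GM_lim[OF rep_in] by (rule convergent_imp_Bseq[OF convergentI])
    then show "\<exists>K. \<forall>M. \<bar>GM M (replicate m i)\<bar> \<le> K" unfolding Bseq_def by auto
  qed
  then obtain K where K: "\<And>M i. \<bar>GM M (replicate m i)\<bar> \<le> K i" by metis
  define B where "B = max 1 (\<Sum>i\<in>UNIV. \<bar>K i\<bar>)"
  have Vb: "\<bar>V M j $ i\<bar> \<le> B" if j: "j < R" for M j i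
  proof -
    have "(V M j $ i) ^ m \<le> (\<Sum>j'<R. (V M j' $ i) ^ m)"
      using j m by (intro member_le_sum) (auto simp: zero_le_even_power)
    also have "\<dots> = GM M (replicate m i)" using V[OF rep_in] by (simp add: rk_replicate)
    also have "\<dots> \<le> K i" using K[of M i] by simp
    also have "\<dots> \<le> (\<Sum>i\<in>UNIV. \<bar>K i\<bar>)"
      using member_le_sum[of i UNIV "\<lambda>i. \<bar>K i\<bar>"] by simp
    finally have pw: "\<bar>V M j $ i\<bar> ^ m \<le> (\<Sum>i\<in>UNIV. \<bar>K i\<bar>)"
      using m by (simp add: power_even_abs)
    show ?thesis
    proof (cases "\<bar>V M j $ i\<bar> \<le> 1")
      case True then show ?thesis by (simp add: B_def)
    next
      case False
      then have "\<bar>V M j $ i\<bar> \<le> \<bar>V M j $ i\<bar> ^ m" using m by (intro self_le_power) auto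
      then show ?thesis using pw by (simp add: B_def)
    qed
  qed
  have "norm (V M j) \<le> real CARD('n) * B" if "j < R" for M j
  proof -
    have "norm (V M j) \<le> (\<Sum>i\<in>UNIV. \<bar>V M j $ i\<bar>)" by (rule norm_le_l1_cart)
    also have "\<dots> \<le> (\<Sum>i\<in>(UNIV::'n set). B)" by (intro sum_mono Vb that)
    finally show ?thesis by simp
  qed
  then obtain \<sigma> W where sw: "strict_mono \<sigma>" "\<forall>j<R. (\<lambda>M. V (\<sigma> M) j) \<longlonglongrightarrow> W j"
    using extract_subseq[of R V] by blast
  have "G is = (\<Sum>j<R. rk m (W j) is)" if "is \<in> I" for "is"
  proof -
    have l1: "(\<lambda>M. GM (\<sigma> M) is) \<longlonglongrightarrow> G is"
      using LIMSEQ_subseq_LIMSEQ[OF GM_lim[OF that] sw(1)] by (simp add: o_def)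
    have "(\<lambda>M. \<Sum>j<R. rk m (V (\<sigma> M) j) is) \<longlonglongrightarrow> (\<Sum>j<R. rk m (W j) is)"
      unfolding rk_def using sw(2) by (intro tendsto_sum tendsto_prod tendsto_vec_nth) auto
    moreover have "(\<lambda>M. \<Sum>j<R. rk m (V (\<sigma> M) j) is) = (\<lambda>M. GM (\<sigma> M) is)"
      using V[OF that] by simp
    ultimately show ?thesis using l1 LIMSEQ_unique by metis
  qed
  then show ?thesis
    unfolding completely_decomposable_def G_def[symmetric] I_def[symmetric]
    by (intro exI[of _ "map W [0..<R]"])
       (simp add: interv_sum_list_conv_sum_set_nat atLeast0LessThan rk_def o_def)
qed

lemma prod_nth_mset: "(\<Prod>t<length xs. f (xs ! t)) = prod_mset (image_mset f (mset xs))"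
  by (induction xs) (simp_all del: prod.lessThan_Suc add: prod.lessThan_Suc_shift)

lemma sum_nth_mset: "(\<Sum>t<length xs. f (xs ! t)) = sum_mset (image_mset f (mset xs))"
  by (induction xs) (simp_all del: sum.lessThan_Suc add: sum.lessThan_Suc_shift)

lemma gen_cauchy_symmetric: "symmetric_tensor m (gen_cauchy_tensor c d)"
  unfolding symmetric_tensor_def gen_cauchy_tensor_def
  by (metis prod_nth_mset sum_nth_mset size_mset)

lemma sum_sum_list_swap: "(\<Sum>x\<in>S. \<Sum>v\<leftarrow>xs. g v x) = (\<Sum>v\<leftarrow>xs. \<Sum>x\<in>S. g v x)"
  by (induction xs) (simp_all add: sum.distrib)

lemma sum_list_mult_right: "(\<Sum>v\<leftarrow>xs. f v) * (X::real) = (\<Sum>v\<leftarrow>xs. f v * X)"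
  by (induction xs) (simp_all add: algebra_simps)

lemma cd_imp_sos:
  fixes A :: "'n::finite tensor"
  assumes "even m" "symmetric_tensor m A" "completely_decomposable m A"
  shows "sos_tensor m A"
proof -
  obtain xs :: "(real^'n) list" where xs: "\<forall>is\<in>index_tuples m. A is = (\<Sum>v\<leftarrow>xs. \<Prod>t<m. v $ (is ! t))"
    using assms(3) unfolding completely_decomposable_def by blast
  define k where "k = m div 2"
  have mk: "m = 2 * k" using assms(1) by (simp add: k_def)
  have "\<forall>v::real^'n. \<exists>p. \<forall>x::real^'n. (\<Sum>i\<in>UNIV. v $ i * x $ i) ^ k = poly_eval k p x"
    using linear_pow_poly by (intro allI) (rule linear_pow_poly)
  then have "\<exists>P. \<forall>(v::real^'n) (x::real^'n). (\<Sum>i\<in>UNIV. v $ i * x $ i) ^ k = poly_eval k (P v) x"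
    by (rule choice)
  then obtain P where P0: "\<forall>(v::real^'n) (x::real^'n). (\<Sum>i\<in>UNIV. v $ i * x $ i) ^ k = poly_eval k (P v) x"
    by (elim exE)
  note P = P0[rule_format]
  have tf: "tensor_form m A x = (\<Sum>p\<leftarrow>map P xs. (poly_eval (m div 2) p x)^2)" for x
  proof -
    have "tensor_form m A x = (\<Sum>is\<in>index_tuples m. (\<Sum>v\<leftarrow>xs. \<Prod>t<m. v $ (is ! t)) * (\<Prod>t<m. x $ (is ! t)))"
      unfolding tensor_form_def using xs by (intro sum.cong) auto
    also have "\<dots> = (\<Sum>v\<leftarrow>xs. \<Sum>is\<in>index_tuples m. \<Prod>t<m. v $ (is ! t) * x $ (is ! t))"
    proof -
      have "(\<Sum>is\<in>index_tuples m. (\<Sum>v\<leftarrow>xs. \<Prod>t<m. v $ (is ! t)) * (\<Prod>t<m. x $ (is ! t)))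
         = (\<Sum>is\<in>index_tuples m. \<Sum>v\<leftarrow>xs. \<Prod>t<m. v $ (is ! t) * x $ (is ! t))"
        by (simp only: sum_list_mult_right prod.distrib)
      also have "\<dots> = (\<Sum>v\<leftarrow>xs. \<Sum>is\<in>index_tuples m. \<Prod>t<m. v $ (is ! t) * x $ (is ! t))"
        by (rule sum_sum_list_swap)
      finally show ?thesis .
    qed
    also have "\<dots> = (\<Sum>v\<leftarrow>xs. (\<Sum>i\<in>UNIV. v $ i * x $ i) ^ m)"
      by (simp only: pow_sum_tuples)
    also have "\<dots> = (\<Sum>v\<leftarrow>xs. (poly_eval k (P v) x)^2)"
    proof -
      have pm: "y ^ m = (y ^ k)^2" for y::real using mk by (simp add: power_mult[symmetric] mult.commute)
      show ?thesis by (simp only: pm P)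
    qed
    finally show ?thesis by (simp only: k_def map_map o_def)
  qed
  show ?thesis unfolding sos_tensor_def
    by (intro conjI assms(2) exI[of _ "map P xs"] allI tf)
qed

lemma sos_imp_psd: "sos_tensor m A \<Longrightarrow> psd_tensor m A"
  unfolding sos_tensor_def psd_tensor_def by (auto intro!: sum_list_nonneg)

lemma psd_imp_pos:
  fixes c d :: "real^'n::finite"
  assumes m: "even m" "m > 0" and d: "\<forall>i. d $ i \<noteq> 0"
    and c: "\<forall>is\<in>index_tuples m. (\<Sum>t<m. c $ (is ! t)) \<noteq> 0"
    and psd: "psd_tensor m (gen_cauchy_tensor c d)"
  shows "c $ i > 0"
proof -
  let ?x = "axis i (1::real)"
  have "tensor_form m (gen_cauchy_tensor c d) ?x
      = (\<Sum>is\<in>index_tuples m. gen_cauchy_tensor c d is * (if is = replicate m i then 1 else 0))"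
    unfolding tensor_form_def
  proof (rule sum.cong[OF refl])
    fix "is" :: "'n list" assume "is \<in> index_tuples m"
    then have len: "length is = m" by (simp add: index_tuples_def)
    have "(\<Prod>t<m. ?x $ (is ! t)) = (if is = replicate m i then 1 else 0)"
    proof (cases "is = replicate m i")
      case True then show ?thesis by (simp add: axis_def)
    next
      case False
      then obtain t where t: "t < m" "is ! t \<noteq> i" using len
        by (metis replicate_eqI in_set_conv_nth)
      then have "(\<Prod>t<m. ?x $ (is ! t)) = 0"
        by (intro prod_zero) (auto simp: axis_def intro!: bexI[of _ t])
      then show ?thesis using False by simp
    qed
    then show "gen_cauchy_tensor c d is * (\<Prod>t<m. ?x $ (is ! t)) = gen_cauchy_tensor c d is * (if is = replicate m i then 1 else 0)" by simp
  qed
  also have "\<dots> = (\<Sum>is\<in>index_tuples m. if is = replicate m i then gen_cauchy_tensor c d is else 0)"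
    by (rule sum.cong) auto
  also have "\<dots> = gen_cauchy_tensor c d (replicate m i)"
    by (subst sum.delta[OF finite_index_tuples]) (simp add: index_tuples_def)
  also have "\<dots> = (d $ i) ^ m / (real m * c $ i)"
    by (simp add: gen_cauchy_tensor_def)
  finally have eq: "tensor_form m (gen_cauchy_tensor c d) ?x = (d $ i) ^ m / (real m * c $ i)" .
  have "(d $ i) ^ m > 0" using d m by (simp add: zero_less_power_eq)
  moreover have "(d $ i) ^ m / (real m * c $ i) \<ge> 0" using psd eq unfolding psd_tensor_def by metis
  ultimately have "real m * c $ i \<ge> 0" by (simp add: zero_le_divide_iff)
  moreover have "real m * c $ i \<noteq> 0"
    using c[rule_format, of "replicate m i"] by (simp add: index_tuples_def)
  ultimately show ?thesis using m by (simp add: zero_le_mult_iff)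
qed

theorem theorem3p1:
  fixes c d :: "real ^ 'n" and m :: nat
  assumes "even m" and "m \<ge> 2" and "CARD('n) \<ge> 2"
    and "\<forall>i. d $ i \<noteq> 0"
    and "\<forall>is\<in>index_tuples m. (\<Sum>t<m. c $ (is ! t)) \<noteq> 0"
  shows "(completely_decomposable m (gen_cauchy_tensor c d) \<longleftrightarrow> sos_tensor m (gen_cauchy_tensor c d))
       \<and> (sos_tensor m (gen_cauchy_tensor c d) \<longleftrightarrow> psd_tensor m (gen_cauchy_tensor c d))
       \<and> (psd_tensor m (gen_cauchy_tensor c d) \<longleftrightarrow> (\<forall>i. c $ i > 0))"
proof -
  have m0: "m > 0" using assms(2) by simp
  have 1: "completely_decomposable m (gen_cauchy_tensor c d) \<Longrightarrow> sos_tensor m (gen_cauchy_tensor c d)"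
    using cd_imp_sos[OF assms(1) gen_cauchy_symmetric] .
  have 2: "sos_tensor m (gen_cauchy_tensor c d) \<Longrightarrow> psd_tensor m (gen_cauchy_tensor c d)"
    by (rule sos_imp_psd)
  have 3: "psd_tensor m (gen_cauchy_tensor c d) \<Longrightarrow> \<forall>i. c $ i > 0"
    using psd_imp_pos[OF assms(1) m0 assms(4) assms(5)] by blast
  have 4: "\<forall>i. c $ i > 0 \<Longrightarrow> completely_decomposable m (gen_cauchy_tensor c d)"
    using cd_of_pos[OF m0 assms(1)] by blast
  show ?thesis using 1 2 3 4 by blast
qed
end
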